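(* Let $N\in\mathbb Z_{\ge1}$, $m\in\mathbb Z$, $\xi$ a primitive $k$th root of unity, $s:=\lfloor N/k\rfloor$, $M:=s+m\ge0$, and $N_k\in\{0,\dots,k-1\}$ with $N_k\equiv N\bmod k$. Then $$A_m(\xi,N)=\frac{(-1)^s\xi^{-m}}{k^{2s+1}s!}\Big[\prod_{w=N_k+1}^{k-1}(1-\xi^w)\Big]\sum_{1j_1+2j_2+\dots+Mj_M=M}\frac{1}{j_1!\cdots j_M!}\,X_1^{j_1}X_2^{j_2}\cdots X_M^{j_M},$$ where the sum is over $j_1,\dots,j_M\in\mathbb Z_{\ge0}$ (replaced by $1$ when $M=0$), $$X_1:=-m-\frac{N(N+1)}2-\sum_{r=0}^{k-1}\frac{\beta_1(\xi^r)S_{1,r}(m,N)}{1\cdot1!},\qquad X_n:=-\sum_{r=0}^{k-1}\frac{\beta_n(\xi^r)S_{n,r}(m,N)}{n\cdot n!}\ (n\ge2).$$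
   Context: $(q)_N:=(1-q)\cdots(1-q^N)$ and $A_m(\xi,N)$ is the coefficient of $(q-\xi)^m$ in the Laurent expansion of $1/(q)_N$ about $q=\xi$. Apostol–Bernoulli numbers: $\frac{z}{\rho e^z-1}=\sum_{n\ge0}\beta_n(\rho)z^n/n!$ (so $\beta_n(1)=B_n$). For fixed $k$, $S_{n,r}(m,N):=\delta_{0,r}(m+1)+\sum_{1\le j\le N,\ j\equiv r\bmod k}j^n$, with $\delta$ the Kronecker delta. Empty products equal $1$. *)

theory Defs
  imports "HOL-Complex_Analysis.Complex_Analysis"
begin

definition qpoch :: "complex \<Rightarrow> nat \<Rightarrow> complex" where
  "qpoch q N = (\<Prod>i=1..N. 1 - q ^ i)"

definition A_coeff :: "int \<Rightarrow> complex \<Rightarrow> nat \<Rightarrow> complex" where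
  "A_coeff m \<xi> N = fls_nth (laurent_expansion (\<lambda>q. 1 / qpoch q N) \<xi>) m"

definition apostol_bernoulli :: "nat \<Rightarrow> complex \<Rightarrow> complex" where
  "apostol_bernoulli n \<rho> =
     fact n * fls_nth (laurent_expansion (\<lambda>z. z / (\<rho> * exp z - 1)) 0) (int n)"

definition S_sum :: "nat \<Rightarrow> nat \<Rightarrow> nat \<Rightarrow> int \<Rightarrow> nat \<Rightarrow> complex" where
  "S_sum k n r m N =
     (if r = 0 then of_int (m + 1) else 0) +
     (\<Sum>j\<in>{j. 1 \<le> j \<and> j \<le> N \<and> j mod k = r mod k}. of_nat j ^ n)"

definition X_term :: "nat \<Rightarrow> complex \<Rightarrow> int \<Rightarrow> nat \<Rightarrow> nat \<Rightarrow> complex" where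
  "X_term k \<xi> m N n =
     (if n = 1 then - of_int m - of_nat (N * (N + 1)) / 2 else 0)
     - (\<Sum>r=0..k-1. apostol_bernoulli n (\<xi> ^ r) * S_sum k n r m N / (of_nat n * fact n))"

text \<open>Tuples (j_1,...,j_M) of nonnegative integers with 1 j_1 + ... + M j_M = M,
  represented as functions nat => nat vanishing outside {1..M}.\<close>
definition weighted_partitions :: "nat \<Rightarrow> (nat \<Rightarrow> nat) set" where
  "weighted_partitions M =
     {j. (\<forall>i. i \<notin> {1..M} \<longrightarrow> j i = 0) \<and> (\<Sum>i=1..M. i * j i) = M}"

end

theory Submission
  imports Defs "HOL-Computational_Algebra.Polynomial"
begin

unbundle no vec_syntax
unbundle fps_syntax

lemma dlog_unique:
  fixes A B P Q :: "complex fps"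
  assumes "A$0 = B$0" "fps_deriv A = A*P" "fps_deriv B = B*Q" "\<forall>n<M. P$n = Q$n"
  shows "n \<le> M \<Longrightarrow> A$n = B$n"
proof (induction n rule: less_induct)
  case (less n)
  show ?case
  proof (cases n)
    case 0 then show ?thesis using assms(1) by simp
  next
    case (Suc n')
    have "of_nat (n'+1) * A$(n'+1) = (A*P)$n'"
      using arg_cong[OF assms(2), of "\<lambda>F. F$n'"] by simp
    also have "\<dots> = (\<Sum>i=0..n'. A$i * P$(n'-i))" by (simp add: fps_mult_nth)
    also have "\<dots> = (\<Sum>i=0..n'. B$i * Q$(n'-i))"
      using less Suc assms(4) by (intro sum.cong) auto
    also have "\<dots> = (B*Q)$n'" by (simp add: fps_mult_nth)
    also have "\<dots> = of_nat (n'+1) * B$(n'+1)"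
      using arg_cong[OF assms(3), of "\<lambda>F. F$n'"] by simp
    finally show ?thesis using Suc by (simp del: of_nat_Suc)
  qed
qed

definition expmon :: "nat \<Rightarrow> complex \<Rightarrow> complex fps" where
  "expmon i y = Abs_fps (\<lambda>n. if i dvd n then y ^ (n div i) / fact (n div i) else 0)"

lemma expmon_deriv:
  assumes "i \<ge> 1"
  shows "fps_deriv (expmon i y) = expmon i y * (fps_const (of_nat i * y) * fps_X ^ (i - 1))"
proof (rule fps_ext)
  fix n
  have r: "(expmon i y * (fps_const (of_nat i * y) * fps_X ^ (i - 1))) $ n
      = (if n < i - 1 then 0 else of_nat i * y * expmon i y $ (n - (i - 1)))"
    by (simp add: mult.commute[of "expmon i y"] mult.assoc fps_X_power_mult_nth)
  show "fps_deriv (expmon i y) $ n = (expmon i y * (fps_const (of_nat i * y) * fps_X ^ (i - 1))) $ n"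
  proof (cases "i dvd (n+1)")
    case True
    then obtain q where q: "n + 1 = i * q" by blast
    with assms have q1: "q \<ge> 1" by (cases q) auto
    have nn: "n - (i - 1) = i * (q - 1)" using q q1 assms
      by (simp add: algebra_simps diff_mult_distrib2)
    have "i \<le> i * q" using q1 by simp
    then have ni: "\<not> n < i - 1" using q by linarith
    have "fps_deriv (expmon i y) $ n = of_nat (i*q) * (y ^ q / fact q)"
      using q assms by (simp add: expmon_def del: of_nat_Suc of_nat_mult) 
    also have "\<dots> = of_nat i * y * (y ^ (q-1) / fact (q-1))"
    proof -
      obtain p where p: "q = Suc p" using q1 by (cases q) auto
      have "fact (Suc p) = (of_nat (Suc p) :: complex) * fact p" by simp
      moreover have "(fact p :: complex) \<noteq> 0" by simp
      moreover have "(of_nat (Suc p) :: complex) \<noteq> 0" by (simp del: of_nat_Suc)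
      ultimately show ?thesis unfolding p by (simp add: field_simps del: of_nat_Suc fact_Suc) (simp only: of_nat_Suc, simp add: algebra_simps)
    qed
    also have "\<dots> = (expmon i y * (fps_const (of_nat i * y) * fps_X ^ (i - 1))) $ n"
      using r ni nn assms by (simp add: expmon_def)
    finally show ?thesis .
  next
    case False
    have "fps_deriv (expmon i y) $ n = 0" using False by (simp add: expmon_def)
    moreover have "\<not> i dvd (n - (i - 1))" if "\<not> n < i - 1"
    proof
      assume "i dvd (n - (i - 1))"
      then have "i dvd (n - (i - 1) + i)" by simp
      moreover have "n - (i - 1) + i = n + 1" using that assms by simp
      ultimately show False using False by simp
    qed
    ultimately show ?thesis using r by (auto simp: expmon_def)
  qed
qed

lemma expmon_0 [simp]: "expmon i y $ 0 = 1"
  by (simp add: expmon_def)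

lemma fps_deriv_prod_dlog:
  fixes F L :: "nat \<Rightarrow> complex fps"
  assumes "finite S" "\<And>i. i \<in> S \<Longrightarrow> fps_deriv (F i) = F i * L i"
  shows "fps_deriv (\<Prod>i\<in>S. F i) = (\<Prod>i\<in>S. F i) * (\<Sum>i\<in>S. L i)"
  using assms
proof (induction S rule: finite_induct)
  case (insert x S)
  then show ?case by (simp add: algebra_simps)
qed simp

lemma fps_prod_nth_0: "(\<Prod>i\<in>S. F i :: complex fps) $ 0 = (\<Prod>i\<in>S. F i $ 0)"
  by (induction S rule: infinite_finite_induct) auto



definition PK :: "nat \<Rightarrow> nat \<Rightarrow> (nat \<Rightarrow> nat) set" where
  "PK K d = {j::nat\<Rightarrow>nat. (\<forall>i. i \<notin> {1..K} \<longrightarrow> j i = 0) \<and> (\<Sum>i=1..K. i * j i) = d}"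

lemma PK_finite: "finite (PK K d)"
proof -
  have "PK K d \<subseteq> {j::nat\<Rightarrow>nat. \<forall>x. (x \<in> {1..K} \<longrightarrow> j x \<in> {0..d}) \<and> (x \<notin> {1..K} \<longrightarrow> j x = 0)}"
  proof (clarsimp simp: PK_def)
    fix j :: "nat \<Rightarrow> nat" and x assume "\<forall>i. (Suc 0 \<le> i \<longrightarrow> \<not> i \<le> K) \<longrightarrow> j i = 0" "Suc 0 \<le> x" "x \<le> K"
    have "x * j x \<le> (\<Sum>i=Suc 0..K. i * j i)"
      using \<open>Suc 0 \<le> x\<close> \<open>x \<le> K\<close> by (intro member_le_sum) auto
    moreover have "j x \<le> x * j x" using \<open>Suc 0 \<le> x\<close> by simp
    ultimately show "j x \<le> (\<Sum>i=Suc 0..K. i * j i)" by linarith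
  qed
  moreover have "finite {j. \<forall>x. (x \<in> {1..K} \<longrightarrow> j x \<in> {0..d}) \<and> (x \<notin> {1..K} \<longrightarrow> j x = (0::nat))}"
    by (intro finite_set_of_finite_funs) auto
  ultimately show ?thesis using finite_subset by blast
qed

lemma PK_0: "PK 0 d = (if d = 0 then {\<lambda>_. 0} else {})"
  by (auto simp: PK_def)

lemma sum_multiples:
  fixes f :: "nat \<Rightarrow> complex"
  assumes "q \<ge> 1" "\<And>b. b \<le> d \<Longrightarrow> \<not> q dvd b \<Longrightarrow> f b = 0"
  shows "(\<Sum>b=0..d. f b) = (\<Sum>u=0..d div q. f (q * u))"
proof -
  have "(\<Sum>b=0..d. f b) = (\<Sum>b\<in>(\<lambda>u. q*u) ` {0..d div q}. f b)"
  proof (rule sum.mono_neutral_right)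
    show "(\<lambda>u. q*u) ` {0..d div q} \<subseteq> {0..d}"
    proof
      fix b assume "b \<in> (\<lambda>u. q*u) ` {0..d div q}"
      then obtain u where "u \<in> {0..d div q}" "b = q*u" by (rule imageE) blast
      then have "b \<le> q * (d div q)" by simp
      also have "q * (d div q) \<le> d" by (rule times_div_less_eq_dividend)
      finally show "b \<in> {0..d}" by simp
    qed
    show "\<forall>i\<in>{0..d} - (\<lambda>u. q*u) ` {0..d div q}. f i = 0"
    proof
      fix b assume b: "b \<in> {0..d} - (\<lambda>u. q*u) ` {0..d div q}"
      have "\<not> q dvd b"
      proof
        assume "q dvd b"
        then obtain u where "b = q*u" by blast
        moreover have "u \<le> d div q"
        proof -
          have "b \<le> d" using b by auto
          from this have "(q*u) div q \<le> d div q" using \<open>b = q*u\<close> div_le_mono by blast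
          then show ?thesis using assms(1) by simp
        qed
        ultimately show False using b by auto
      qed
      then show "f b = 0" using b assms(2) by auto
    qed
  qed simp
  also have "\<dots> = (\<Sum>u=0..d div q. f (q * u))"
    using assms(1) by (subst sum.reindex) (auto simp: inj_on_def)
  finally show ?thesis .
qed

lemma PK_Suc_bij:
  fixes Y :: "nat \<Rightarrow> complex" and K d :: nat
  defines "q \<equiv> Suc K"
  defines "c \<equiv> (\<lambda>j. \<Prod>i=1..K. Y i ^ j i / fact (j i))"
  shows "(\<Sum>p\<in>Sigma {0..d div q} (\<lambda>u. PK K (d - q*u)). c (snd p) * (Y q ^ fst p / fact (fst p))) =  (\<Sum>j\<in>PK (Suc K) d. \<Prod>i=1..Suc K. Y i ^ j i / fact (j i))"
proof (rule sum.reindex_bij_witness[where i = "\<lambda>j. (j q, j(q := 0))" and j = "\<lambda>p. (snd p)(q := fst p)"])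
  fix p assume p: "p \<in> Sigma {0..d div q} (\<lambda>u. PK K (d - q*u))"
  then obtain u j where pe: "p = (u, j)" and u: "u \<le> d div q" and j: "j \<in> PK K (d - q*u)" by auto
  have jq: "j q = 0" using j by (auto simp: PK_def q_def)
  show "(((snd p)(q := fst p)) q, ((snd p)(q := fst p))(q := 0)) = p"
    using jq pe by auto
  have "q * u \<le> q * (d div q)" using u by simp
  also have "q * (d div q) \<le> d" by (rule times_div_less_eq_dividend)
  finally have qu: "q*u \<le> d" .
  have s1: "(\<Sum>i=1..K. i * j i) = d - q*u" using j by (simp add: PK_def)
  have "(\<Sum>i=1..Suc K. i * (j(q := u)) i) = (\<Sum>i=1..K. i * (j(q := u)) i) + q * u"
    by (simp add: q_def)
  also have "(\<Sum>i=1..K. i * (j(q := u)) i) = (\<Sum>i=1..K. i * j i)"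
    by (intro sum.cong) (auto simp: q_def)
  also have "\<dots> + q * u = d" using s1 qu by simp
  finally have "(\<Sum>i=1..Suc K. i * (j(q := u)) i) = d" .
  moreover have "\<forall>i. i \<notin> {1..Suc K} \<longrightarrow> (j(q:=u)) i = 0"
  proof (intro allI impI)
    fix i assume i: "i \<notin> {1..Suc K}"
    then have "i \<noteq> q" "i \<notin> {1..K}" by (auto simp: q_def)
    then show "(j(q:=u)) i = 0" using j by (simp add: PK_def)
  qed
  ultimately show "(snd p)(q := fst p) \<in> PK (Suc K) d"
    using pe unfolding PK_def by simp
  have "(\<Prod>i=1..Suc K. Y i ^ (j(q := u)) i / fact ((j(q := u)) i))
      = (\<Prod>i=1..K. Y i ^ (j(q := u)) i / fact ((j(q := u)) i)) * (Y q ^ u / fact u)"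
    by (simp add: q_def)
  also have "(\<Prod>i=1..K. Y i ^ (j(q := u)) i / fact ((j(q := u)) i)) = c j"
    unfolding c_def by (intro prod.cong) (auto simp: q_def)
  finally show "(\<Prod>i=1..Suc K. Y i ^ ((snd p)(q := fst p)) i / fact (((snd p)(q := fst p)) i)) =
               c (snd p) * (Y q ^ fst p / fact (fst p))" using pe by simp
next
  fix j assume j: "j \<in> PK (Suc K) d"
  have s: "(\<Sum>i=1..Suc K. i * j i) = d" using j by (simp add: PK_def)
  hence s2: "(\<Sum>i=1..K. i * j i) + q * j q = d" by (simp add: q_def)
  hence "q * j q \<le> d" by simp
  hence "(q * j q) div q \<le> d div q" by (rule div_le_mono)
  moreover have "q \<noteq> 0" by (simp add: q_def)
  ultimately have "j q \<le> d div q" by simp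
  moreover have "j(q := 0) \<in> PK K (d - q * j q)"
  proof -
    have "(\<Sum>i=1..K. i * (j(q:=0)) i) = (\<Sum>i=1..K. i * j i)"
      by (intro sum.cong) (auto simp: q_def)
    moreover have "\<forall>i. i \<notin> {1..K} \<longrightarrow> (j(q:=0)) i = 0"
    proof (intro allI impI)
      fix i assume "i \<notin> {1..K}"
      show "(j(q:=0)) i = 0"
      proof (cases "i = q")
        case False
        then have "i \<notin> {1..Suc K}" using \<open>i \<notin> {1..K}\<close> by (auto simp: q_def)
        then show ?thesis using j False by (simp add: PK_def)
      qed simp
    qed
    ultimately show ?thesis using s2 unfolding PK_def by simp
  qed
  ultimately show "(j q, j(q := 0)) \<in> Sigma {0..d div q} (\<lambda>u. PK K (d - q*u))" by auto
  show "(snd (j q, j(q := 0)))(q := fst (j q, j(q := 0))) = j" by simp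
qed

lemma expmon_nth_mult: "i \<ge> 1 \<Longrightarrow> expmon i y $ (i*u) = y^u / fact u"
  by (simp add: expmon_def)

lemma expmon_prod_nth:
  "(\<Prod>i=1..K. expmon i (Y i)) $ d = (\<Sum>j\<in>PK K d. \<Prod>i=1..K. Y i ^ j i / fact (j i))"
proof (induction K arbitrary: d)
  case 0
  then show ?case by (simp add: PK_0)
next
  case (Suc K)
  define q where "q = Suc K"
  have q1: "q \<ge> 1" by (simp add: q_def)
  define P where "P = (\<Prod>i=1..K. expmon i (Y i))"
  define c where "c = (\<lambda>j. \<Prod>i=1..K. Y i ^ j i / fact (j i))"
  have "(\<Prod>i=1..Suc K. expmon i (Y i)) = expmon q (Y q) * P"
    by (simp add: P_def q_def mult.commute)
  hence "(\<Prod>i=1..Suc K. expmon i (Y i)) $ d = (\<Sum>b=0..d. expmon q (Y q) $ b * P $ (d - b))"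
    by (simp add: fps_mult_nth)
  also have "\<dots> = (\<Sum>u=0..d div q. expmon q (Y q) $ (q*u) * P $ (d - q*u))"
    by (rule sum_multiples[OF q1]) (simp add: expmon_def)
  also have "\<dots> = (\<Sum>u=0..d div q. Y q ^ u / fact u * (\<Sum>j\<in>PK K (d - q*u). c j))"
    by (intro sum.cong refl) (use Suc.IH in \<open>simp add: expmon_nth_mult[OF q1] P_def c_def\<close>)
  also have "\<dots> = (\<Sum>u=0..d div q. \<Sum>j\<in>PK K (d - q*u). c j * (Y q ^ u / fact u))"
    by (simp add: sum_distrib_left mult_ac)
  also have "\<dots> = (\<Sum>p\<in>Sigma {0..d div q} (\<lambda>u. PK K (d - q*u)). c (snd p) * (Y q ^ fst p / fact (fst p)))"
    by (subst sum.Sigma) (auto simp: PK_finite split_def)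
  also have "\<dots> = (\<Sum>j\<in>PK (Suc K) d. \<Prod>i=1..Suc K. Y i ^ j i / fact (j i))"
    unfolding q_def c_def by (rule PK_Suc_bij)
  finally show ?case .
qed



lemma coeff_from_dlog:
  fixes W :: "complex fps" and Y :: "nat \<Rightarrow> complex"
  assumes "W $ 0 = 1" "fps_deriv W = W * Abs_fps (\<lambda>n. of_nat (n+1) * Y (n+1))"
  shows "W $ M = (\<Sum>j\<in>weighted_partitions M. \<Prod>i=1..M. Y i ^ j i / fact (j i))"
proof -
  define T where "T = (\<Prod>i=1..M. expmon i (Y i))"
  define Q where "Q = (\<Sum>i=1..M. fps_const (of_nat i * Y i) * fps_X ^ (i - 1))"
  have T0: "T $ 0 = 1" by (simp add: T_def fps_prod_nth_0)
  have dT: "fps_deriv T = T * Q"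
    unfolding T_def Q_def by (rule fps_deriv_prod_dlog) (use expmon_deriv in auto)
  have "\<forall>n<M. Abs_fps (\<lambda>n. of_nat (n+1) * Y (n+1)) $ n = Q $ n"
  proof (intro allI impI)
    fix n assume n: "n < M"
    have "Q $ n = (\<Sum>i=1..M. if i = n + 1 then of_nat i * Y i else 0)"
      unfolding Q_def fps_sum_nth
      by (intro sum.cong refl) (auto simp: fps_X_power_nth)
    also have "\<dots> = of_nat (n+1) * Y (n+1)"
      using n by (simp add: sum.delta)
    finally show "Abs_fps (\<lambda>n. of_nat (n+1) * Y (n+1)) $ n = Q $ n" by simp
  qed
  hence "W $ M = T $ M"
    using dlog_unique[OF _ assms(2) dT, of M M] assms(1) T0 by simp
  also have "\<dots> = (\<Sum>j\<in>PK M M. \<Prod>i=1..M. Y i ^ j i / fact (j i))"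
    unfolding T_def by (rule expmon_prod_nth)
  also have "PK M M = weighted_partitions M"
    by (simp add: PK_def weighted_partitions_def)
  finally show ?thesis .
qed


lemma fls_deriv_powi:
  fixes F :: "complex fls"
  assumes "F \<noteq> 0"
  shows "fls_deriv (F powi n) = of_int n * F powi (n - 1) * fls_deriv F"
proof (cases "n \<ge> 0")
  case True
  then obtain k where k: "n = int k" by (metis nonneg_int_cases)
  show ?thesis
  proof (cases k)
    case 0 then show ?thesis using k by simp
  next
    case (Suc k')
    have e1: "F powi (n - 1) = F ^ k'" using k Suc by (simp add: power_int_def)
    have e2: "F powi n = F ^ k" using k by simp
    show ?thesis unfolding e1 e2 using k Suc by (subst fls_deriv_power) simp
  qed
next
  case False
  then obtain k where k: "n = - int k" "k > 0" by (metis neg_int_cases not_le of_nat_0_less_iff zero_less_Suc less_le)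
  have e1: "F powi n = inverse (F ^ k)" using k by (simp add: power_int_def power_inverse)
  have e2: "F powi (n - 1) = inverse (F ^ (k+1))" using k by (simp add: power_int_def nat_add_distrib power_inverse)
  have kk: "(k - 1) + (k + 1) = k * 2" using k(2) by simp
  have pe: "F ^ (k - 1) * F ^ (k + 1) = (F ^ k)^2"
    by (simp only: power_add[symmetric] power_mult[symmetric] kk)
  have nz: "F ^ (k+1) \<noteq> 0" "F ^ k \<noteq> 0" using assms by auto
  have pe2: "F ^ (k - 1) * (inverse (F ^ k))^2 = inverse (F ^ (k+1))"
  proof -
    have "F ^ (k - 1) * (inverse (F ^ k))^2 = F ^ (k - 1) * (inverse (F ^ k))^2 * (F ^ (k + 1) * inverse (F ^ (k+1)))"
      by (simp only: right_inverse[OF nz(1)] mult_1_right)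
    also have "\<dots> = ((F ^ k)^2 * (inverse (F ^ k))^2) * inverse (F ^ (k+1))"
      by (simp only: pe[symmetric] ac_simps)
    also have "(F ^ k)^2 * (inverse (F ^ k))^2 = 1"
      using nz(2) by (simp add: power_mult_distrib[symmetric])
    finally show ?thesis by simp
  qed
  have "fls_deriv (F powi n) = - (of_nat k * F ^ (k-1) * fls_deriv F) * (inverse (F ^ k))\<^sup>2"
    unfolding e1 by (simp add: fls_inverse_deriv fls_deriv_power)
  also have "\<dots> = - of_nat k * (F ^ (k - 1) * (inverse (F ^ k))^2) * fls_deriv F"
    by (simp add: algebra_simps)
  also have "\<dots> = of_int n * F powi (n - 1) * fls_deriv F"
    unfolding pe2 e2 using k by simp
  finally show ?thesis .
qed

lemma fls_compose_fps_sum: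
  assumes "H \<noteq> 0" "fps_nth H 0 = 0"
  shows "fls_compose_fps (\<Sum>i\<in>S. f i) H = (\<Sum>i\<in>S. fls_compose_fps (f i) H)"
  by (induction S rule: infinite_finite_induct) (auto simp: fls_compose_fps_add assms)

lemma fls_decomp:
  fixes H :: "complex fls"
  shows "H = (\<Sum>i\<in>{fls_subdegree H..-1}. fls_const (H $$ i) * fls_X_intpow i) + fps_to_fls (fls_regpart H)"
proof (rule fls_eqI)
  fix n
  have "(\<Sum>i\<in>{fls_subdegree H..-1}. fls_const (H $$ i) * fls_X_intpow i) $$ n
      = (\<Sum>i\<in>{fls_subdegree H..-1}. if n = i then H $$ i else 0)"
    unfolding fls_nth_sum by (intro sum.cong) auto
  also have "\<dots> = (if n \<in> {fls_subdegree H..-1} then H $$ n else 0)"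
    by (simp add: sum.delta)
  finally show "H $$ n = ((\<Sum>i\<in>{fls_subdegree H..-1}. fls_const (H $$ i) * fls_X_intpow i) + fps_to_fls (fls_regpart H)) $$ n"
    by (cases "n < fls_subdegree H") auto
qed

lemma res_compose:
  fixes H :: "complex fls" and G :: "complex fps"
  assumes G0: "G $ 0 = 0" and G1: "G $ 1 \<noteq> 0"
  shows "fls_residue (fls_compose_fps H G * fps_to_fls (fps_deriv G)) = fls_residue H"
proof -
  have Gnz: "G \<noteq> 0" using G1 by auto
  define Gf where "Gf = fps_to_fls G"
  have dG: "fps_to_fls (fps_deriv G) = fls_deriv Gf" by (simp add: Gf_def fls_deriv_fps_to_fls)
  have Gfnz: "Gf \<noteq> 0" using Gnz by (simp add: Gf_def)
  have sdG: "fls_subdegree Gf = 1"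
  proof -
    have "subdegree G = 1" by (rule subdegreeI) (use G0 G1 in \<open>auto simp: less_Suc_eq_0_disj\<close>)
    then show ?thesis by (simp add: Gf_def fls_subdegree_fls_to_fps)
  qed
  define d where "d = fls_subdegree H"
  have trm: "(fls_compose_fps (fls_const c * fls_X_intpow i) G * fls_deriv Gf) $$ (-1)
        = (if i = -1 then c else 0)" if "i \<le> -1" for c i
  proof -
    have "fls_compose_fps (fls_const c * fls_X_intpow i) G = fls_const c * Gf powi i"
      using Gnz G0 by (simp add: fls_compose_fps_mult fls_compose_fps_powi Gf_def flip: fls_X_power_int)
    hence eq: "fls_compose_fps (fls_const c * fls_X_intpow i) G * fls_deriv Gf = fls_const c * (Gf powi i * fls_deriv Gf)"
      by (simp add: mult.assoc)
    show ?thesis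
    proof (cases "i = -1")
      case True
      have "fls_residue (Gf powi i * fls_deriv Gf) = 1"
        using fls_residue_deriv_times_inverse_eq_subdegree(2)[of Gf] True sdG
        by (simp add: power_int_minus)
      then show ?thesis using eq True by (simp only: fls_residue_def fls_mult_const_nth) simp
    next
      case False
      have "i + 1 \<noteq> 0" using False by simp
      hence ne: "(of_int (i+1) :: complex) \<noteq> 0" by (simp only: of_int_eq_0_iff) simp
      have "fls_deriv (Gf powi (i+1)) = of_int (i+1) * (Gf powi i * fls_deriv Gf)"
        using fls_deriv_powi[OF Gfnz, of "i+1"] by (simp add: mult.assoc)
      hence "fls_const (inverse (of_int (i+1))) * fls_deriv (Gf powi (i+1)) =
           (fls_const (inverse (of_int (i+1))) * fls_const (of_int (i+1))) * (Gf powi i * fls_deriv Gf)"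
        by (simp add: fls_of_int mult.assoc)
      also have "fls_const (inverse (of_int (i+1))) * fls_const (of_int (i+1)) = (1 :: complex fls)"
        using ne by (simp add: fls_const_mult_const)
      finally have "Gf powi i * fls_deriv Gf = fls_const (inverse (of_int (i+1))) * fls_deriv (Gf powi (i+1))"
        by simp
      hence "fls_residue (Gf powi i * fls_deriv Gf) = 0"
        by (simp only: fls_residue_def fls_mult_const_nth) (simp add: fls_residue_deriv[simplified])
      then show ?thesis using eq False by (simp only: fls_residue_def fls_mult_const_nth) simp
    qed
  qed
  have "fls_compose_fps H G * fls_deriv Gf =
      (\<Sum>i\<in>{d..-1}. fls_compose_fps (fls_const (H $$ i) * fls_X_intpow i) G * fls_deriv Gf)
      + fps_to_fls ((fls_regpart H oo G) * fps_deriv G)"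
  proof -
    have "fls_compose_fps H G = fls_compose_fps ((\<Sum>i\<in>{d..-1}. fls_const (H $$ i) * fls_X_intpow i) + fps_to_fls (fls_regpart H)) G"
      using fls_decomp[of H] d_def by simp
    also have "\<dots> = (\<Sum>i\<in>{d..-1}. fls_compose_fps (fls_const (H $$ i) * fls_X_intpow i) G) + fps_to_fls (fls_regpart H oo G)"
      using Gnz G0 by (simp add: fls_compose_fps_add fls_compose_fps_sum)
    finally show ?thesis
      by (simp add: sum_distrib_right distrib_right dG fls_times_fps_to_fls Gf_def flip: fls_deriv_fps_to_fls)
  qed
  hence "fls_residue (fls_compose_fps H G * fls_deriv Gf) =
      (\<Sum>i\<in>{d..-1}. (fls_compose_fps (fls_const (H $$ i) * fls_X_intpow i) G * fls_deriv Gf) $$ (-1))"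
    by (simp add: fls_nth_sum)
  also have "\<dots> = (\<Sum>i\<in>{d..-1}. if i = -1 then H $$ i else 0)"
    by (intro sum.cong refl) (simp add: trm del: fls_residue_def)
  also have "\<dots> = fls_residue H"
    by (cases "d \<le> -1") (auto simp: sum.delta d_def)
  finally show ?thesis by (simp add: dG)
qed



abbreviation lc :: "complex fls \<Rightarrow> complex" where "lc F \<equiv> F $$ fls_subdegree F"

lemma lc_mult: "F \<noteq> 0 \<Longrightarrow> G \<noteq> 0 \<Longrightarrow> lc (F * G) = lc F * lc G"
  by simp

lemma lc_inverse: "F \<noteq> 0 \<Longrightarrow> lc (inverse F) = inverse (lc F)"
  by (simp add: fls_inverse_base)

lemma lc_power: "F \<noteq> 0 \<Longrightarrow> lc (F ^ n) = lc F ^ n"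
  by (induction n) (auto simp: lc_mult)

lemma lc_powi:
  assumes "F \<noteq> 0" shows "lc (F powi n) = lc F powi n"
proof (cases "n \<ge> 0")
  case True
  then have "F powi n = F ^ nat n" "lc F powi n = lc F ^ nat n" by (simp_all add: power_int_def)
  then show ?thesis using lc_power[OF assms] by simp
next
  case False
  then have e: "F powi n = inverse (F ^ nat (-n))" "lc F powi n = inverse (lc F ^ nat (-n))"
    by (simp_all add: power_int_def power_inverse)
  have "lc (inverse (F ^ nat (-n))) = inverse (lc (F ^ nat (-n)))"
    by (rule lc_inverse) (use assms in simp)
  then show ?thesis unfolding e using lc_power[OF assms] by simp
qed

lemma sd_prod: "finite S \<Longrightarrow> (\<And>i. i \<in> S \<Longrightarrow> F i \<noteq> (0::complex fls)) \<Longrightarrow>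
   fls_subdegree (\<Prod>i\<in>S. F i) = (\<Sum>i\<in>S. fls_subdegree (F i))"
  by (induction S rule: finite_induct) (auto simp: prod_zero_iff)

lemma lc_prod: "finite S \<Longrightarrow> (\<And>i. i \<in> S \<Longrightarrow> F i \<noteq> (0::complex fls)) \<Longrightarrow>
   lc (\<Prod>i\<in>S. F i) = (\<Prod>i\<in>S. lc (F i))"
proof (induction S rule: finite_induct)
  case (insert x S)
  have "(\<Prod>i\<in>S. F i) \<noteq> 0" using insert by (auto simp: prod_zero_iff)
  then show ?case using insert by (simp add: lc_mult del: fls_subdegree_mult fls_times_base)
qed simp

definition eX :: "complex \<Rightarrow> complex fls" where "eX c = fps_to_fls (fps_exp c)"

definition Qd :: "complex \<Rightarrow> nat \<Rightarrow> complex fls" where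
  "Qd \<rho> i = fls_const \<rho> * eX (of_nat i) - 1"

definition Dfl :: "complex \<Rightarrow> nat \<Rightarrow> complex fls" where
  "Dfl \<rho> i = fls_const (of_nat i) * fls_X / Qd \<rho> i"

lemma Qd_nth: "Qd \<rho> i $$ n = (if n < 0 then 0 else \<rho> * of_nat i ^ nat n / fact (nat n)) - (if n = 0 then 1 else 0)"
  by (simp add: Qd_def eX_def fps_exp_def)

lemma Qd_nz: "i \<ge> 1 \<Longrightarrow> Qd \<rho> i \<noteq> 0"
proof
  assume i: "i \<ge> 1" and "Qd \<rho> i = 0"
  then have "Qd \<rho> i $$ 0 = 0" "Qd \<rho> i $$ 1 = 0" by auto
  then show False using i by (simp add: Qd_nth)
qed

lemma Qd_sd:
  assumes "i \<ge> 1"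
  shows "fls_subdegree (Qd \<rho> i) = (if \<rho> = 1 then 1 else 0)"
    and "lc (Qd \<rho> i) = (if \<rho> = 1 then of_nat i else \<rho> - 1)"
proof -
  have "fls_subdegree (Qd \<rho> i) = (if \<rho> = 1 then 1 else 0)"
  proof (cases "\<rho> = 1")
    case True
    show ?thesis using True assms by (intro fls_subdegree_eqI) (auto simp: Qd_nth)
  next
    case False
    show ?thesis using False by (intro fls_subdegree_eqI) (auto simp: Qd_nth)
  qed
  then show "fls_subdegree (Qd \<rho> i) = (if \<rho> = 1 then 1 else 0)"
    and "lc (Qd \<rho> i) = (if \<rho> = 1 then of_nat i else \<rho> - 1)"
    by (auto simp: Qd_nth)
qed

lemma Dfl_nz: "i \<ge> 1 \<Longrightarrow> Dfl \<rho> i \<noteq> 0"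
  using Qd_nz by (auto simp: Dfl_def)

lemma Dfl_sd:
  assumes "i \<ge> 1"
  shows "fls_subdegree (Dfl \<rho> i) = (if \<rho> = 1 then 0 else 1)"
    and "lc (Dfl \<rho> i) = (if \<rho> = 1 then 1 else of_nat i / (\<rho> - 1))"
proof -
  define A :: "complex fls" where "A = fls_const (of_nat i) * fls_X"
  define Q where "Q = Qd \<rho> i"
  have nz: "A \<noteq> 0" using assms by (simp add: A_def)
  have sd1: "fls_subdegree A = 1" using assms by (simp add: A_def)
  have lc1: "lc A = of_nat i" using assms by (simp add: A_def)
  have Qnz: "Q \<noteq> 0" using Qd_nz[OF assms] by (simp add: Q_def)
  have DQ: "Dfl \<rho> i = A * inverse Q" by (simp add: Dfl_def A_def Q_def field_simps)
  have iQ: "inverse Q \<noteq> 0" using Qnz by simp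
  have "fls_subdegree (A * inverse Q) = 1 - fls_subdegree Q"
    using nz iQ sd1 by simp
  then show "fls_subdegree (Dfl \<rho> i) = (if \<rho> = 1 then 0 else 1)"
    using Qd_sd(1)[OF assms, of \<rho>] by (simp add: DQ Q_def)
  have "lc (A * inverse Q) = lc A * lc (inverse Q)" by (rule lc_mult[OF nz iQ])
  also have "lc (inverse Q) = inverse (lc Q)" by (rule lc_inverse[OF Qnz])
  finally have "lc (Dfl \<rho> i) = of_nat i * inverse (lc Q)" unfolding DQ lc1 .
  then show "lc (Dfl \<rho> i) = (if \<rho> = 1 then 1 else of_nat i / (\<rho> - 1))"
    using Qd_sd(2)[OF assms, of \<rho>] assms by (simp add: Q_def field_simps split: if_splits)
qed

lemma Dfl_neg: "i \<ge> 1 \<Longrightarrow> n < 0 \<Longrightarrow> Dfl \<rho> i $$ n = 0"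
  using Dfl_sd(1)[of i \<rho>] by (intro fls_eq0_below_subdegree) (auto split: if_splits)

lemma Dfl_0: "i \<ge> 1 \<Longrightarrow> Dfl \<rho> i $$ 0 = (if \<rho> = 1 then 1 else 0)"
  using Dfl_sd[of i \<rho>] by (cases "\<rho> = 1") auto

lemma Dfl_dlog:
  assumes "i \<ge> 1"
  shows "fls_X * fls_deriv (Dfl \<rho> i) = Dfl \<rho> i * (1 - Dfl \<rho> i) - fls_const (of_nat i) * fls_X * Dfl \<rho> i"
proof -
  define Q where "Q = Qd \<rho> i"
  define c :: "complex fls" where "c = fls_const (of_nat i)"
  have Qnz: "Q \<noteq> 0" using Qd_nz[OF assms] by (simp add: Q_def)
  have dQ: "fls_deriv Q = c * (Q + 1)"
    by (simp add: Q_def c_def Qd_def eX_def fls_deriv_fps_to_fls mult_ac fls_const_mult_const[symmetric] flip: fps_const_to_fls fls_times_fps_to_fls)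
  have D: "Dfl \<rho> i = c * fls_X * inverse Q" by (simp add: Dfl_def Q_def c_def field_simps)
  have dD: "fls_deriv (Dfl \<rho> i) = c * inverse Q - c * fls_X * fls_deriv Q * (inverse Q)^2"
    unfolding D by (simp add: fls_inverse_deriv c_def algebra_simps)
  show ?thesis
    unfolding c_def[symmetric] dD unfolding D dQ using Qnz
    by (simp add: field_simps power2_eq_square)
qed



lemma prim_pow_eq_1:
  fixes \<xi> :: complex
  assumes "k \<ge> 1" "\<xi> ^ k = 1" "\<forall>j. 0 < j \<and> j < k \<longrightarrow> \<xi> ^ j \<noteq> 1"
  shows "\<xi> ^ i = 1 \<longleftrightarrow> k dvd i"
proof -
  have e: "\<xi> ^ i = \<xi> ^ (i mod k)"
  proof -
    have "\<xi> ^ i = \<xi> ^ (k * (i div k) + i mod k)" by simp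
    also have "\<dots> = (\<xi> ^ k) ^ (i div k) * \<xi> ^ (i mod k)" by (simp only: power_add power_mult)
    finally have "\<xi> ^ i = (\<xi> ^ k) ^ (i div k) * \<xi> ^ (i mod k)" .
    then show ?thesis using assms(2) by simp
  qed
  have "i mod k < k" using assms(1) by simp
  then show ?thesis unfolding e using assms(3) by (cases "i mod k = 0") (auto simp: dvd_eq_mod_eq_0)
qed

lemma prim_pow_mod:
  fixes \<xi> :: complex
  assumes "\<xi> ^ k = 1"
  shows "\<xi> ^ i = \<xi> ^ (i mod k)"
proof -
  have "\<xi> ^ i = \<xi> ^ (k * (i div k) + i mod k)" by simp
  also have "\<dots> = (\<xi> ^ k) ^ (i div k) * \<xi> ^ (i mod k)" by (simp only: power_add power_mult)
  finally have "\<xi> ^ i = (\<xi> ^ k) ^ (i div k) * \<xi> ^ (i mod k)" .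
  then show ?thesis using assms by simp
qed

lemma prim_prod_one_minus:
  fixes \<xi> :: complex
  assumes k: "k \<ge> 1" and x1: "\<xi> ^ k = 1" and prim: "\<forall>j. 0 < j \<and> j < k \<longrightarrow> \<xi> ^ j \<noteq> 1"
  shows "(\<Prod>w=1..k-1. 1 - \<xi> ^ w) = of_nat k"
proof -
  define Q where "Q = (\<Prod>w=1..k-1. [:- (\<xi> ^ w), 1:])"
  define S where "S = (\<Sum>j<k. monom (1::complex) j)"
  have degQ: "degree Q = k - 1"
    unfolding Q_def by (subst degree_prod_eq_sum_degree) auto
  have lcQ: "coeff Q (k - 1) = 1"
    using lead_coeff_prod[of "\<lambda>w. [:- (\<xi> ^ w), 1:]" "{1..k-1}"] degQ by (simp add: Q_def)
  have degS: "degree S \<le> k - 1"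
    unfolding S_def by (intro degree_sum_le) (auto simp: degree_monom_eq)
  have lcS: "coeff S (k - 1) = 1"
    unfolding S_def coeff_sum using k by (simp add: coeff_monom)
  have xnz: "\<xi> \<noteq> 0" using x1 k by (auto simp: power_0_left)
  have inj: "inj_on (\<lambda>w. \<xi> ^ w) {1..k-1}"
  proof (rule inj_onI)
    fix a b assume ab: "a \<in> {1..k-1}" "b \<in> {1..k-1}" "\<xi> ^ a = \<xi> ^ b"
    show "a = b"
    proof (rule ccontr)
      assume "a \<noteq> b"
      then show False
      proof (cases "a < b")
        case True
        have "\<xi> ^ b = \<xi> ^ a * \<xi> ^ (b - a)" using True by (simp flip: power_add)
        then have "\<xi> ^ a * \<xi> ^ (b - a) = \<xi> ^ a * 1" using ab(3) by simp
        then have "\<xi> ^ (b - a) = 1" using xnz by (subst (asm) mult_left_cancel) auto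
        then show False using prim True ab by auto
      next
        case False
        with \<open>a \<noteq> b\<close> have "b < a" by simp
        have "\<xi> ^ a = \<xi> ^ b * \<xi> ^ (a - b)" using \<open>b < a\<close> by (simp flip: power_add)
        then have "\<xi> ^ b * \<xi> ^ (a - b) = \<xi> ^ b * 1" using ab(3) by simp
        then have "\<xi> ^ (a - b) = 1" using xnz by (subst (asm) mult_left_cancel) auto
        then show False using prim \<open>b < a\<close> ab by auto
      qed
    qed
  qed
  have "Q = S"
  proof (rule poly_eqI_degree_lead_coeff[of _ "k - 1" _ "(\<lambda>w. \<xi> ^ w) ` {1..k-1}"])
    show "coeff Q (k - 1) = coeff S (k - 1)" using lcQ lcS by simp
    show "k - 1 \<le> card ((\<lambda>w. \<xi> ^ w) ` {1..k-1})" using card_image[OF inj] by simp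
    show "degree Q \<le> k - 1" using degQ by simp
    show "degree S \<le> k - 1" by (rule degS)
    fix z assume "z \<in> (\<lambda>w. \<xi> ^ w) ` {1..k-1}"
    then obtain w where w: "w \<in> {1..k-1}" "z = \<xi> ^ w" by blast
    have "poly Q z = 0" unfolding Q_def poly_prod using w by (intro prod_zero) auto
    moreover have "poly S z = 0"
    proof -
      have z1: "z \<noteq> 1" using w prim by auto
      have "z ^ k = (\<xi> ^ k) ^ w" by (simp add: w(2) power_mult[symmetric] mult.commute)
      then have "z ^ k = 1" using x1 by simp
      have "poly S z = (\<Sum>j<k. z ^ j)" unfolding S_def by (simp add: poly_sum poly_monom)
      also have "\<dots> = 0" using z1 \<open>z ^ k = 1\<close> by (simp add: sum_gp_strict)
      finally show ?thesis .
    qed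
    ultimately show "poly Q z = poly S z" by simp
  qed
  hence "poly Q 1 = poly S 1" by simp
  moreover have "poly Q 1 = (\<Prod>w=1..k-1. 1 - \<xi> ^ w)" by (simp add: Q_def poly_prod)
  moreover have "poly S 1 = of_nat k" by (simp add: S_def poly_sum poly_monom)
  ultimately show ?thesis by simp
qed



lemma exp_le: "(\<lambda>z::complex. exp z) has_laurent_expansion fps_to_fls (fps_exp 1)"
  by (intro has_laurent_expansion_fps fps_expansion_intros)

lemma beta_le: "laurent_expansion (\<lambda>z. z / (\<rho> * exp z - 1)) 0 = fls_X / (fls_const \<rho> * fps_to_fls (fps_exp 1) - 1)"
  by (rule laurent_expansion_0_eqI) (intro laurent_expansion_intros exp_le)

lemma A_le: "laurent_expansion (\<lambda>q. 1 / qpoch q N) \<xi> = 1 / (\<Prod>i=1..N. 1 - (fls_const \<xi> + fls_X) ^ i)"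
  by (rule laurent_expansion_eqI) (unfold qpoch_def, intro laurent_expansion_intros)

lemma beta_Dfl: "apostol_bernoulli n \<rho> = fact n * Dfl \<rho> 1 $$ int n"
  by (simp add: apostol_bernoulli_def beta_le Dfl_def Qd_def eX_def)

lemma Dfl_scale:
  assumes "i \<ge> 1"
  shows "Dfl \<rho> i = fls_compose_fps (Dfl \<rho> 1) (fps_const (of_nat i) * fps_X)"
proof -
  define H :: "complex fps" where "H = fps_const (of_nat i) * fps_X"
  have H: "H \<noteq> 0" "H $ 0 = 0" using assms by (auto simp: H_def)
  have "fls_compose_fps (Dfl \<rho> 1) H = fls_compose_fps fls_X H / fls_compose_fps (Qd \<rho> 1) H"
    using H by (simp add: Dfl_def fls_compose_fps_divide)
  also have "fls_compose_fps fls_X H = fls_const (of_nat i) * fls_X"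
    by (simp add: H_def fls_times_fps_to_fls flip: fps_const_to_fls)
  also have "fls_compose_fps (Qd \<rho> 1) H = Qd \<rho> i"
    using H by (simp add: Qd_def eX_def fls_compose_fps_diff fls_compose_fps_mult H_def)
  finally show ?thesis by (simp add: Dfl_def H_def)
qed

lemma Dfl_nth:
  assumes "i \<ge> 1"
  shows "Dfl \<rho> i $$ int n = of_nat i ^ n * apostol_bernoulli n \<rho> / fact n"
proof -
  have "Dfl \<rho> i $$ int n = Dfl \<rho> 1 $$ int n * of_nat i powi int n"
    using assms by (subst Dfl_scale[OF assms]) (simp add: fls_nth_fls_compose_fps_linear)
  then show ?thesis by (simp add: beta_Dfl)
qed



locale prim =
  fixes k :: nat and \<xi> :: complex
  assumes k1: "k \<ge> 1" and x1: "\<xi> ^ k = 1" and prim: "\<forall>j. 0 < j \<and> j < k \<longrightarrow> \<xi> ^ j \<noteq> 1"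
begin

lemma eq1: "\<xi> ^ i = 1 \<longleftrightarrow> k dvd i"
  using prim_pow_eq_1[OF k1 x1 prim] .

lemma pmod: "\<xi> ^ i = \<xi> ^ (i mod k)"
  using prim_pow_mod[OF x1] .

lemma xnz: "\<xi> \<noteq> 0" using x1 k1 by (auto simp: power_0_left)

lemma count_sd: "(\<Sum>i=1..N. (if \<xi> ^ i = 1 then 0 else 1 :: int)) = int N - int (N div k)"
proof (induction N)
  case (Suc N)
  have "(\<Sum>i=1..Suc N. (if \<xi> ^ i = 1 then 0 else 1 :: int)) =
        (\<Sum>i=1..N. (if \<xi> ^ i = 1 then 0 else 1 :: int)) + (if k dvd Suc N then 0 else 1)"
    by (simp add: eq1)
  also have "\<dots> = int (Suc N) - int (Suc N div k)"
    using Suc by (auto simp: div_Suc dvd_eq_mod_eq_0)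
  finally show ?case .
qed simp

definition Fc :: "nat \<Rightarrow> complex" where
  "Fc N = (\<Prod>i=1..N. if \<xi> ^ i = 1 then 1 else of_nat i / (\<xi> ^ i - 1))"

definition tl :: "nat \<Rightarrow> complex" where
  "tl N = (\<Prod>w=N mod k + 1..k-1. 1 - \<xi> ^ w)"

lemma const_ind:
  "Fc N * (of_nat k ^ (2 * (N div k) + 1) * fact (N div k) * (-1) ^ N) = (-1) ^ (N div k) * fact N * tl N"
proof (induction N)
  case 0
  show ?case using prim_prod_one_minus[OF k1 x1 prim] by (simp add: Fc_def tl_def)
next
  case (Suc N)
  define s where "s = N div k"
  define a where "a = N mod k"
  have ak: "a < k" using k1 by (simp add: a_def)
  show ?case
  proof (cases "k dvd Suc N")
    case True
    have sm: "Suc N mod k = 0" using True by simp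
    have a1: "Suc a = k" using sm ak by (simp add: mod_Suc a_def split: if_splits)
    have sd: "Suc N div k = Suc s" using sm by (simp add: div_Suc s_def)
    have NN: "Suc N = k * Suc s" using sd sm by (metis div_mult_mod_eq add_0_right mult.commute)
    have F: "Fc (Suc N) = Fc N" using True by (simp add: Fc_def eq1)
    have t0: "tl N = 1" using a1 by (simp add: tl_def a_def[symmetric])
    have t1: "tl (Suc N) = of_nat k" using sm prim_prod_one_minus[OF k1 x1 prim] by (simp add: tl_def)
    have "Fc (Suc N) * (of_nat k ^ (2 * (Suc N div k) + 1) * fact (Suc N div k) * (-1) ^ Suc N)
        = (Fc N * (of_nat k ^ (2 * s + 1) * fact s * (-1) ^ N)) * (- (of_nat k ^ 2 * of_nat (Suc s)))"
      unfolding F sd by (simp add: algebra_simps power_add power2_eq_square)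
    also have "\<dots> = (-1) ^ s * fact N * (- (of_nat k ^ 2 * of_nat (Suc s)))"
      using Suc.IH t0 by (simp add: s_def)
    also have "\<dots> = (-1) ^ (Suc N div k) * fact (Suc N) * tl (Suc N)"
    proof -
      have "(of_nat (Suc N) :: complex) = of_nat k * of_nat (Suc s)" by (simp only: NN of_nat_mult)
      then show ?thesis unfolding sd t1 by (simp add: algebra_simps power2_eq_square)
    qed
    finally show ?thesis .
  next
    case False
    have sm: "Suc N mod k = Suc a" using False ak by (simp add: mod_Suc a_def dvd_eq_mod_eq_0 split: if_splits)
    have sd: "Suc N div k = s" using False by (simp add: div_Suc s_def dvd_eq_mod_eq_0)
    have xa: "\<xi> ^ Suc N = \<xi> ^ Suc a" using pmod[of "Suc N"] sm by simp
    have "\<xi> ^ Suc N \<noteq> 1" using False eq1 by blast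
    hence xa1: "\<xi> ^ Suc a \<noteq> 1" using xa by (simp del: power_Suc)
    have sak: "Suc a \<le> k - 1" using sm k1 by (metis Suc_leI less_Suc_eq_le mod_less_divisor not_less_eq_eq Suc_diff_1 neq0_conv zero_less_one order.strict_trans2)
    have F: "Fc (Suc N) = Fc N * (of_nat (Suc N) / (\<xi> ^ Suc a - 1))"
      using xa1 xa \<open>\<xi> ^ Suc N \<noteq> 1\<close> by (simp add: Fc_def del: power_Suc)
    have t: "tl N = (1 - \<xi> ^ Suc a) * tl (Suc N)"
      unfolding tl_def a_def[symmetric] sm using sak by (simp add: prod.atLeast_Suc_atMost)
    have ne: "1 - \<xi> ^ Suc a \<noteq> 0" "\<xi> ^ Suc a - 1 \<noteq> 0" using xa1 by auto
    have "Fc (Suc N) * (of_nat k ^ (2 * (Suc N div k) + 1) * fact (Suc N div k) * (-1) ^ Suc N)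
        = (Fc N * (of_nat k ^ (2 * s + 1) * fact s * (-1) ^ N)) * (of_nat (Suc N) / (1 - \<xi> ^ Suc a))"
      unfolding F sd using ne by (simp add: field_simps)
    also have "\<dots> = (-1) ^ s * fact N * tl N * (of_nat (Suc N) / (1 - \<xi> ^ Suc a))"
      using Suc.IH by (simp add: s_def)
    also have "\<dots> = (-1) ^ (Suc N div k) * fact (Suc N) * tl (Suc N)"
      unfolding sd t using ne by (simp add: field_simps)
    finally show ?thesis .
  qed
qed

lemma const_final:
  "\<xi> powi (- m) * ((-1) ^ N / fact N) * Fc N =
   (-1) ^ (N div k) * \<xi> powi (- m) / (of_nat k ^ (2 * (N div k) + 1) * fact (N div k)) * tl N"
proof -
  have nz: "(of_nat k ^ (2 * (N div k) + 1) * fact (N div k) * (-1) ^ N :: complex) \<noteq> 0" using k1 by simp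
  have "Fc N = (-1) ^ (N div k) * fact N * tl N / (of_nat k ^ (2 * (N div k) + 1) * fact (N div k) * (-1) ^ N)"
    using const_ind[of N] nz by (simp add: field_simps)
  then show ?thesis using k1 by (simp add: field_simps)
qed


lemma group_S:
  "(\<Sum>r=0..k-1. apostol_bernoulli n (\<xi> ^ r) * S_sum k n r m N) =
   of_int (m+1) * apostol_bernoulli n 1 + (\<Sum>i=1..N. of_nat i ^ n * apostol_bernoulli n (\<xi> ^ i))"
proof -
  have "(\<Sum>r=0..k-1. apostol_bernoulli n (\<xi> ^ r) * S_sum k n r m N) =
      (\<Sum>r=0..k-1. (if r = 0 then of_int (m+1) * apostol_bernoulli n 1 else 0)) +
      (\<Sum>r=0..k-1. \<Sum>j\<in>{x\<in>{1..N}. x mod k = r}. of_nat j ^ n * apostol_bernoulli n (\<xi> ^ j))"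
    unfolding sum.distrib[symmetric]
  proof (intro sum.cong refl)
    fix r assume r: "r \<in> {0..k-1}"
    have rk: "r mod k = r" using r k1 by auto
    have J: "{j. 1 \<le> j \<and> j \<le> N \<and> j mod k = r mod k} = {x\<in>{1..N}. x mod k = r}"
      using rk by auto
    have "(\<Sum>j\<in>{x\<in>{1..N}. x mod k = r}. of_nat j ^ n * apostol_bernoulli n (\<xi> ^ j)) =
          (\<Sum>j\<in>{x\<in>{1..N}. x mod k = r}. apostol_bernoulli n (\<xi> ^ r) * of_nat j ^ n)"
    proof (intro sum.cong refl)
      fix j assume "j \<in> {x\<in>{1..N}. x mod k = r}"
      then have "\<xi> ^ j = \<xi> ^ r" using pmod[of j] by auto
      then show "of_nat j ^ n * apostol_bernoulli n (\<xi> ^ j) = apostol_bernoulli n (\<xi> ^ r) * of_nat j ^ n"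
        by simp
    qed
    then show "apostol_bernoulli n (\<xi> ^ r) * S_sum k n r m N =
       (if r = 0 then of_int (m + 1) * apostol_bernoulli n 1 else 0) +
       (\<Sum>j\<in>{x\<in>{1..N}. x mod k = r}. of_nat j ^ n * apostol_bernoulli n (\<xi> ^ j))"
      unfolding S_sum_def J by (simp add: distrib_left sum_distrib_left algebra_simps)
  qed
  also have "(\<Sum>r=0..k-1. (if r = 0 then of_int (m+1) * apostol_bernoulli n 1 else 0)) = of_int (m+1) * apostol_bernoulli n 1"
    by (simp add: sum.delta)
  also have "(\<Sum>r=0..k-1. \<Sum>j\<in>{x\<in>{1..N}. x mod k = r}. of_nat j ^ n * apostol_bernoulli n (\<xi> ^ j)) =
      (\<Sum>i=1..N. of_nat i ^ n * apostol_bernoulli n (\<xi> ^ i))"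
    by (rule sum.group) (use k1 in \<open>auto simp: less_Suc_eq_le[symmetric]\<close>)
  finally show ?thesis .
qed

end


definition ld :: "complex fls \<Rightarrow> complex fls" where
  "ld F = fls_X * fls_deriv F / F"

lemma ld_mult: "F \<noteq> 0 \<Longrightarrow> G \<noteq> 0 \<Longrightarrow> ld (F * G) = ld F + ld G"
  by (simp add: ld_def field_simps)

lemma ld_const: "ld (fls_const c) = 0"
  by (simp add: ld_def)

lemma ld_Xint: "ld (fls_X_intpow a) = of_int a"
proof -
  have "fls_X * fls_X_intpow (a - 1) = (fls_X_intpow a :: complex fls)"
    using fls_X_intpow_times_fls_X_intpow[of 1 "a - 1"] by (simp add: fls_X_conv_shift_1)
  then show ?thesis
    by (simp add: ld_def fls_deriv_X_intpow mult.left_commute[of fls_X] del: fls_X_intpow_times_fls_X_intpow)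
qed

lemma ld_powi: "F \<noteq> 0 \<Longrightarrow> ld (F powi n) = of_int n * ld F"
proof -
  assume F: "F \<noteq> 0"
  have "F powi (n - 1) * F = F powi n" using F by (simp add: power_int_diff)
  then show ?thesis using F
    by (simp add: ld_def fls_deriv_powi field_simps power_int_diff)
qed

lemma ld_prod: "finite S \<Longrightarrow> (\<And>i. i \<in> S \<Longrightarrow> F i \<noteq> 0) \<Longrightarrow> ld (\<Prod>i\<in>S. F i) = (\<Sum>i\<in>S. ld (F i))"
proof (induction S rule: finite_induct)
  case empty then show ?case by (simp add: ld_def)
next
  case (insert x S)
  then show ?case by (simp add: ld_mult prod_zero_iff)
qed

lemma eX_nz: "eX c \<noteq> 0" by (simp add: eX_def fps_exp_def fps_eq_iff)

lemma ld_eX1: "ld (eX 1) = fls_X"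
  using eX_nz[of 1] by (simp add: ld_def eX_def fls_deriv_fps_to_fls)

lemma ld_Dfl: "i \<ge> 1 \<Longrightarrow> ld (Dfl \<rho> i) = 1 - Dfl \<rho> i - fls_const (of_nat i) * fls_X"
  using Dfl_dlog[of i \<rho>] Dfl_nz[of i \<rho>] by (simp add: ld_def field_simps)


lemma fls_compose_fps_prod:
  assumes "H \<noteq> 0" "fps_nth H 0 = 0"
  shows "fls_compose_fps (\<Prod>i\<in>S. f i) H = (\<Prod>i\<in>S. fls_compose_fps (f i) H)"
  by (induction S rule: infinite_finite_induct) (auto simp: fls_compose_fps_mult assms)

lemma fls_const_prod: "(\<Prod>i\<in>S. fls_const (c i)) = fls_const (\<Prod>i\<in>S. c i :: complex)"
  by (induction S rule: infinite_finite_induct) (auto simp: fls_const_mult_const)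

lemma Qd_Dfl: "i \<ge> 1 \<Longrightarrow> Qd \<rho> i = fls_const (of_nat i) * fls_X * inverse (Dfl \<rho> i)"
  using Qd_nz[of i \<rho>] by (simp add: Dfl_def field_simps)

lemma eX_power: "eX c ^ n = eX (of_nat n * c)"
  by (simp add: eX_def fps_exp_power_mult flip: fps_to_fls_power)

lemma inv_factor:
  assumes "i \<ge> 1"
  shows "1 / (1 - (fls_const \<rho> * eX 1) ^ i) = fls_const (- 1 / of_nat i) * fls_X_intpow (-1) * Dfl (\<rho> ^ i) i"
proof -
  have "(fls_const \<rho> * eX 1) ^ i = fls_const (\<rho> ^ i) * eX (of_nat i)"
    by (simp add: power_mult_distrib eX_power fls_const_power)
  hence "1 - (fls_const \<rho> * eX 1) ^ i = - Qd (\<rho> ^ i) i" by (simp add: Qd_def)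
  also have "\<dots> = - (fls_const (of_nat i) * fls_X * inverse (Dfl (\<rho> ^ i) i))"
    using Qd_Dfl[OF assms] by simp
  finally have e: "1 - (fls_const \<rho> * eX 1) ^ i = - (fls_const (of_nat i) * fls_X * inverse (Dfl (\<rho> ^ i) i))" .
  have "inverse (fls_const (of_nat i) * fls_X * inverse (Dfl (\<rho> ^ i) i)) =
        fls_const (inverse (of_nat i)) * fls_X_inv * Dfl (\<rho> ^ i) i"
    using assms Dfl_nz[OF assms, of "\<rho> ^ i"]
    by (simp add: fls_inverse_const fls_inverse_X field_simps) (simp add: fls_X_inv_conv_shift_1 fls_X_conv_shift_1 fls_shifted_times_simps)
  then show ?thesis unfolding e
    by (simp add: divide_inverse fls_X_inv_conv_shift_1 flip: fls_const_mult_const)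
qed


lemma Phi_rep:
  fixes \<xi> :: complex and N :: nat and m :: int
  assumes xnz: "\<xi> \<noteq> 0"
  defines "G \<equiv> fps_const \<xi> * (fps_exp 1 - 1)"
  shows "fls_compose_fps (fls_X_intpow (-m-1) * (1 / (\<Prod>i=1..N. 1 - (fls_const \<xi> + fls_X)^i))) G * fps_to_fls (fps_deriv G)
   = fls_const (\<xi> powi (-m) * ((-1)^N / fact N)) * fls_X_intpow (-(m+1+int N)) *
     (Dfl 1 1 powi (m+1) * (\<Prod>i=1..N. Dfl (\<xi>^i) i) * eX 1)"
proof -
  have H: "G \<noteq> 0" "G $ 0 = 0"
  proof -
    have "G $ 1 = \<xi>" by (simp add: G_def)
    then show "G \<noteq> 0" using xnz by auto
    show "G $ 0 = 0" by (simp add: G_def)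
  qed
  define D1 where "D1 = Dfl 1 1"
  have D1nz: "D1 \<noteq> 0" using Dfl_nz[of 1 1] by (simp add: D1_def)
  have Gf: "fps_to_fls G = fls_const \<xi> * (fls_X * inverse D1)"
    using Qd_Dfl[of 1 1] by (simp add: G_def D1_def Qd_def eX_def fls_times_fps_to_fls)
  have Gd: "fps_to_fls (fps_deriv G) = fls_const \<xi> * eX 1"
    by (simp add: G_def eX_def fls_times_fps_to_fls)
  have c1: "fls_compose_fps (fls_X_intpow (-m-1)) G =
      fls_const (\<xi> powi (-m-1)) * fls_X_intpow (-m-1) * D1 powi (m+1)"
  proof -
    have "fls_X_intpow (-m-1) = (fls_X :: complex fls) powi (-m-1)" by (rule fls_X_power_int[symmetric])
    hence "fls_compose_fps (fls_X_intpow (-m-1)) G = fls_compose_fps fls_X G powi (-m-1)"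
      using fls_compose_fps_powi[OF H, of fls_X "-m-1"] by simp
    also have "\<dots> = fps_to_fls G powi (-m-1)" by simp
    finally have "fls_compose_fps (fls_X_intpow (-m-1)) G = fps_to_fls G powi (-m-1)" .
    also have "\<dots> = fls_const (\<xi> powi (-m-1)) * fls_X_intpow (-m-1) * D1 powi (m+1)"
      unfolding Gf by (simp add: power_int_mult_distrib fls_const_power_int power_int_inverse
                           power_int_minus[symmetric] mult.assoc add.commute)
    finally show ?thesis .
  qed
  have c3: "fls_const \<xi> + fps_to_fls G = fls_const \<xi> * eX 1"
    by (simp add: G_def eX_def algebra_simps fls_times_fps_to_fls)
  have c2: "fls_compose_fps (1 / (\<Prod>i=1..N. 1 - (fls_const \<xi> + fls_X)^i)) G =
      (\<Prod>i=1..N. 1 / (1 - (fls_const \<xi> * eX 1)^i))"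
    using H by (simp add: fls_compose_fps_divide fls_compose_fps_prod fls_compose_fps_diff
        fls_compose_fps_power fls_compose_fps_add c3 prod_dividef)
  also have "\<dots> = (\<Prod>i=1..N. fls_const (- 1 / of_nat i) * fls_X_intpow (-1) * Dfl (\<xi> ^ i) i)"
    by (intro prod.cong refl inv_factor) auto
  also have "\<dots> = fls_const ((-1)^N / fact N) * fls_X_intpow (- int N) * (\<Prod>i=1..N. Dfl (\<xi> ^ i) i)"
  proof -
    have "(\<Prod>i=1..N. (- 1 / of_nat i :: complex)) = (\<Prod>i=1..N. (-1::complex)) / (\<Prod>i=1..N. of_nat i)"
      by (rule prod_dividef)
    also have "\<dots> = (-1)^N / fact N" by (simp add: fact_prod of_nat_prod)
    finally have p1: "(\<Prod>i=1..N. (- 1 / of_nat i :: complex)) = (-1)^N / fact N" .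
    have p2: "(\<Prod>i=1..N. fls_X_intpow (-1) :: complex fls) = fls_X_intpow (- int N)"
      using fls_X_intpow_power[of "-1" N, where 'a=complex] by simp
    show ?thesis
      by (simp only: prod.distrib fls_const_prod p1 p2)
  qed
  finally have c2': "fls_compose_fps (1 / (\<Prod>i=1..N. 1 - (fls_const \<xi> + fls_X)^i)) G =
      fls_const ((-1)^N / fact N) * fls_X_intpow (- int N) * (\<Prod>i=1..N. Dfl (\<xi> ^ i) i)" .
  have xi: "\<xi> powi (-m-1) * \<xi> = \<xi> powi (-m)"
    using xnz by (simp add: power_int_diff)
  have "fls_compose_fps (fls_X_intpow (-m-1) * (1 / (\<Prod>i=1..N. 1 - (fls_const \<xi> + fls_X)^i))) G * fps_to_fls (fps_deriv G)
     = (fls_const (\<xi> powi (-m-1)) * fls_X_intpow (-m-1) * D1 powi (m+1)) *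
       (fls_const ((-1)^N / fact N) * fls_X_intpow (- int N) * (\<Prod>i=1..N. Dfl (\<xi> ^ i) i)) *
       (fls_const \<xi> * eX 1)"
    unfolding fls_compose_fps_mult[OF H] c1 c2' Gd ..
  also have "\<dots> = fls_const (\<xi> powi (-m-1) * \<xi> * ((-1)^N / fact N)) * (fls_X_intpow (-m-1) * fls_X_intpow (- int N)) *
      (D1 powi (m+1) * (\<Prod>i=1..N. Dfl (\<xi> ^ i) i) * eX 1)"
    by (simp only: fls_const_mult_const[symmetric] ac_simps)
  also have "fls_X_intpow (-m-1) * fls_X_intpow (- int N) = (fls_X_intpow (-(m+1+int N)) :: complex fls)"
    by (subst fls_X_intpow_times_fls_X_intpow) (simp add: algebra_simps)
  finally show ?thesis by (simp only: xi D1_def)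
qed



lemma gauss_c: "(\<Sum>i=1..N. (of_nat i :: complex)) = of_nat (N * (N + 1)) / 2"
  by (induction N) (simp_all add: field_simps)

lemma res_shift: fixes W :: "complex fls" shows "fls_residue (fls_const c * fls_X_intpow j * W) = c * W $$ (-1 - j)"
proof -
  have e: "fls_X_intpow j * W = fls_shift (-j) W" by (rule fls_X_intpow_times_conv_shift(1))
  have "fls_residue (fls_const c * fls_X_intpow j * W) = (fls_const c * (fls_X_intpow j * W)) $$ (-1)"
    by (simp only: mult.assoc fls_residue_def)
  also have "\<dots> = c * W $$ (-1 - j)" unfolding e by simp
  finally show ?thesis .
qed

lemma shift1_nz [simp]: "fls_shift n (1::complex fls) \<noteq> 0"
  using fls_X_intpow_nonzero[of "-n", where 'a=complex] by simp

context prim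
begin

lemma Pd_facts:
  fixes N :: nat
  defines "Pd \<equiv> (\<Prod>i=1..N. Dfl (\<xi>^i) i)"
  shows "Pd \<noteq> 0" "fls_subdegree Pd = int N - int (N div k)" "lc Pd = Fc N"
proof -
  have nz: "\<And>i. i \<in> {1..N} \<Longrightarrow> Dfl (\<xi>^i) i \<noteq> 0" using Dfl_nz by auto
  show "Pd \<noteq> 0" unfolding Pd_def using nz by (simp add: prod_zero_iff)
  have "fls_subdegree Pd = (\<Sum>i=1..N. fls_subdegree (Dfl (\<xi>^i) i))"
    unfolding Pd_def by (rule sd_prod) (use nz in auto)
  also have "\<dots> = (\<Sum>i=1..N. (if \<xi> ^ i = 1 then 0 else 1 :: int))"
    by (intro sum.cong refl) (simp add: Dfl_sd(1))
  also have "\<dots> = int N - int (N div k)" by (rule count_sd)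
  finally show "fls_subdegree Pd = int N - int (N div k)" .
  have "lc Pd = (\<Prod>i=1..N. lc (Dfl (\<xi>^i) i))"
    unfolding Pd_def by (rule lc_prod) (use nz in auto)
  also have "\<dots> = Fc N" unfolding Fc_def
    by (intro prod.cong refl) (simp add: Dfl_sd(2))
  finally show "lc Pd = Fc N" .
qed

end


theorem proposition5p2:
  fixes k N :: nat and m :: int and \<xi> :: complex
  assumes "k \<ge> 1"
    and "\<xi> ^ k = 1" and "\<forall>j. 0 < j \<and> j < k \<longrightarrow> \<xi> ^ j \<noteq> 1"
    and "N \<ge> 1"
    and "int (N div k) + m \<ge> 0"
  shows "A_coeff m \<xi> N =
    (-1) ^ (N div k) * \<xi> powi (- m) / (of_nat k ^ (2 * (N div k) + 1) * fact (N div k))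
    * (\<Prod>w=N mod k + 1..k-1. 1 - \<xi> ^ w)
    * (\<Sum>j\<in>weighted_partitions (nat (int (N div k) + m)).
         \<Prod>i=1..nat (int (N div k) + m). X_term k \<xi> m N i ^ j i / fact (j i))"
proof -
  interpret prim k \<xi> using assms(1-3) by unfold_locales auto
  define s where "s = N div k"
  define M where "M = nat (int s + m)"
  have Mi: "int M = int s + m" using assms(5) by (simp add: M_def s_def)
  define L where "L = 1 / (\<Prod>i=1..N. 1 - (fls_const \<xi> + fls_X)^i)"
  define G where "G = fps_const \<xi> * (fps_exp 1 - 1)"
  have G0: "G $ 0 = 0" by (simp add: G_def)
  have G1: "G $ 1 \<noteq> 0" using xnz by (simp add: G_def)
  define Pd where "Pd = (\<Prod>i=1..N. Dfl (\<xi>^i) i)"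
  define D1 where "D1 = Dfl 1 1"
  define \<Psi> where "\<Psi> = D1 powi (m+1) * Pd * eX 1"
  define K where "K = \<xi> powi (-m) * ((-1)^N / fact N)"
  have "A_coeff m \<xi> N = L $$ m" by (simp add: A_coeff_def A_le L_def)
  also have "\<dots> = fls_residue (fls_X_intpow (-m-1) * L)" by (rule fls_residue_shift_nth)
  also have "\<dots> = fls_residue (fls_compose_fps (fls_X_intpow (-m-1) * L) G * fps_to_fls (fps_deriv G))"
    by (rule res_compose[symmetric, OF G0 G1])
  also have "fls_compose_fps (fls_X_intpow (-m-1) * L) G * fps_to_fls (fps_deriv G) =
      fls_const K * fls_X_intpow (-(m+1+int N)) * \<Psi>"
    unfolding L_def G_def K_def \<Psi>_def Pd_def D1_def by (rule Phi_rep[OF xnz])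
  finally have A1: "A_coeff m \<xi> N = fls_residue (fls_const K * fls_X_intpow (-(m+1+int N)) * \<Psi>)" .

  have D1nz: "D1 \<noteq> 0" using Dfl_nz[of 1 1] by (simp add: D1_def)
  have sdD1: "fls_subdegree D1 = 0" "lc D1 = 1" using Dfl_sd[of 1 1] by (simp_all add: D1_def)
  have Pdf: "Pd \<noteq> 0" "fls_subdegree Pd = int N - int s" "lc Pd = Fc N"
    using Pd_facts[of N] by (simp_all add: Pd_def s_def)
  have eXf: "eX 1 \<noteq> 0" "fls_subdegree (eX 1) = 0" "lc (eX 1) = 1"
    using eX_nz[of 1] by (simp_all add: eX_def fls_subdegree_fls_to_fps)
  have D1p: "D1 powi (m+1) \<noteq> 0" "fls_subdegree (D1 powi (m+1)) = 0" "lc (D1 powi (m+1)) = 1"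
    using D1nz sdD1 lc_powi[OF D1nz, of "m+1"] by simp_all
  have Psinz: "\<Psi> \<noteq> 0" using D1p Pdf eXf by (simp add: \<Psi>_def)
  have sdPsi: "fls_subdegree \<Psi> = int N - int s"
    using D1p Pdf eXf by (simp add: \<Psi>_def)
  have lcPsi: "lc \<Psi> = Fc N"
  proof -
    have "lc \<Psi> = lc (D1 powi (m+1) * Pd) * lc (eX 1)"
      unfolding \<Psi>_def by (rule lc_mult) (use D1p Pdf eXf in auto)
    also have "lc (D1 powi (m+1) * Pd) = lc (D1 powi (m+1)) * lc Pd"
      by (rule lc_mult) (use D1p Pdf in auto)
    finally show ?thesis using D1p Pdf eXf by simp
  qed
  have Fcnz: "Fc N \<noteq> 0" using lcPsi Psinz by (metis nth_fls_subdegree_nonzero)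
  define W where "W = fls_const (inverse (Fc N)) * fls_X_intpow (-(int N - int s)) * \<Psi>"
  have Wnz: "W \<noteq> 0" using Fcnz Psinz by (simp add: W_def)
  have sdW: "fls_subdegree W = 0" using Fcnz Psinz sdPsi by (simp add: W_def)
  have lcW: "lc W = 1"
  proof -
    have "lc W = lc (fls_const (inverse (Fc N)) * fls_X_intpow (-(int N - int s))) * lc \<Psi>"
      unfolding W_def by (rule lc_mult) (use Fcnz Psinz in auto)
    then show ?thesis using lcPsi Fcnz by simp
  qed
  have PsiW: "fls_const K * fls_X_intpow (-(m+1+int N)) * \<Psi> = fls_const (K * Fc N) * fls_X_intpow (-(int M + 1)) * W"
  proof -
    have "fls_X_intpow (-(int M + 1)) * fls_X_intpow (-(int N - int s)) = (fls_X_intpow (-(m+1+int N)) :: complex fls)"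
      using Mi by (subst fls_X_intpow_times_fls_X_intpow) (simp add: algebra_simps)
    moreover have "fls_const (Fc N) * fls_const (inverse (Fc N)) = (1 :: complex fls)"
      using Fcnz by (simp add: fls_const_mult_const)
    ultimately show ?thesis unfolding W_def
      by (simp only: fls_const_mult_const[symmetric] ac_simps) (simp add: mult.assoc[symmetric])
  qed
  have A2: "A_coeff m \<xi> N = K * Fc N * W $$ int M"
    unfolding A1 PsiW res_shift by simp
  define Wp where "Wp = fls_regpart W"
  have WWp: "W = fps_to_fls Wp" using sdW by (simp add: Wp_def)
  have Wp0: "Wp $ 0 = 1" using lcW sdW by (simp add: Wp_def)
  have WM: "W $$ int M = Wp $ M" by (simp add: WWp)
  define Yp where "Yp = Abs_fps (\<lambda>n. of_nat (n+1) * X_term k \<xi> m N (n+1))"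
  define E where "E = fls_const (of_int (int s - int N)) + fls_const (of_int (m+1)) * (1 - D1 - fls_X)
      + (\<Sum>i=1..N. 1 - Dfl (\<xi>^i) i - fls_const (of_nat i) * fls_X) + fls_X"
  have ldW: "ld W = E"
  proof -
    have nzc: "fls_const (inverse (Fc N)) * fls_X_intpow (-(int N - int s)) \<noteq> 0" using Fcnz by simp
    have "ld W = ld (fls_const (inverse (Fc N)) * fls_X_intpow (-(int N - int s))) + ld \<Psi>"
      unfolding W_def by (rule ld_mult[OF nzc Psinz])
    also have "ld (fls_const (inverse (Fc N)) * fls_X_intpow (-(int N - int s))) = of_int (int s - int N)"
      using Fcnz ld_Xint[of "-(int N - int s)"] by (subst ld_mult) (simp_all add: ld_const)
    also have "ld \<Psi> = ld (D1 powi (m+1)) + ld Pd + ld (eX 1)"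
      unfolding \<Psi>_def using D1p Pdf eXf by (simp add: ld_mult)
    also have "ld (D1 powi (m+1)) = of_int (m+1) * (1 - D1 - fls_X)"
      using ld_powi[OF D1nz] ld_Dfl[of 1 1] by (simp add: D1_def)
    also have "ld Pd = (\<Sum>i=1..N. 1 - Dfl (\<xi>^i) i - fls_const (of_nat i) * fls_X)"
      unfolding Pd_def by (subst ld_prod) (auto intro!: sum.cong ld_Dfl Dfl_nz)
    finally show ?thesis by (simp add: E_def ld_eX1 fls_of_int algebra_simps)
  qed
  have EY: "E = fls_X * fps_to_fls Yp"
  proof (rule fls_eqI)
    fix n :: int
    have Enth: "E $$ n = (if n = 0 then of_int (int s - int N) else 0)
        + of_int (m+1) * ((if n = 0 then 1 else 0) - D1 $$ n - (if n = 1 then 1 else 0))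
        + (\<Sum>i=1..N. (if n = 0 then 1 else 0) - Dfl (\<xi>^i) i $$ n - (if n = 1 then of_nat i else 0))
        + (if n = 1 then 1 else 0)"
      unfolding E_def by (simp add: fls_nth_sum)
    have R: "(fls_X * fps_to_fls Yp) $$ n = (if n < 1 then 0 else Yp $ nat (n - 1))"
      by (simp add: fls_X_times_conv_shift)
    show "E $$ n = (fls_X * fps_to_fls Yp) $$ n"
    proof (cases "n < 0")
      case True
      then show ?thesis unfolding Enth R using Dfl_neg[of 1 n 1] Dfl_neg[of _ n]
        by (simp add: D1_def)
    next
      case False
      show ?thesis
      proof (cases "n = 0")
        case True
        have "(\<Sum>i=1..N. (1::complex) - Dfl (\<xi>^i) i $$ 0) = (\<Sum>i=1..N. of_int (if \<xi> ^ i = 1 then 0 else 1 :: int))"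
          by (intro sum.cong refl) (simp add: Dfl_0)
        also have "\<dots> = of_int (int N - int s)"
          by (simp only: of_int_sum[symmetric] count_sd s_def)
        finally have "(\<Sum>i=1..N. (1::complex) - Dfl (\<xi>^i) i $$ 0) = of_int (int N - int s)" .
        then show ?thesis unfolding Enth R using True Dfl_0[of 1 1]
          by (simp add: D1_def)
      next
        case False
        with \<open>\<not> n < 0\<close> obtain p where p: "n = int p" "p \<ge> 1"
          by (metis nonneg_int_cases not_less of_nat_0 less_one not_le int_one_le_iff_zero_less linorder_neqE_linordered_idom)
        have Dp: "D1 $$ int p = apostol_bernoulli p 1 / fact p"
          using Dfl_nth[of 1 1 p] by (simp add: D1_def)
        have Dip: "\<And>i. i \<in> {1..N} \<Longrightarrow> Dfl (\<xi>^i) i $$ int p = of_nat i ^ p * apostol_bernoulli p (\<xi>^i) / fact p"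
          using Dfl_nth by auto
        have gS: "(\<Sum>r=0..k-1. apostol_bernoulli p (\<xi> ^ r) * S_sum k p r m N) =
            of_int (m+1) * apostol_bernoulli p 1 + (\<Sum>i=1..N. of_nat i ^ p * apostol_bernoulli p (\<xi> ^ i))"
          by (rule group_S)
        have Yp: "Yp $ nat (n - 1) = of_nat p * X_term k \<xi> m N p"
        proof -
          have "nat (n - 1) + 1 = p" using p by simp
          then show ?thesis by (simp add: Yp_def del: of_nat_Suc)
        qed
        have Xt: "of_nat p * X_term k \<xi> m N p = (if p = 1 then - of_int m - of_nat (N * (N + 1)) / 2 else 0)
             - (of_int (m+1) * apostol_bernoulli p 1 + (\<Sum>i=1..N. of_nat i ^ p * apostol_bernoulli p (\<xi> ^ i))) / fact p"
        proof -
          have "of_nat p * X_term k \<xi> m N p = of_nat p * (if p = 1 then - of_int m - of_nat (N * (N + 1)) / 2 else 0)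
              - of_nat p * (\<Sum>r=0..k-1. apostol_bernoulli p (\<xi> ^ r) * S_sum k p r m N / (of_nat p * fact p))"
            by (simp add: X_term_def right_diff_distrib)
          also have "of_nat p * (\<Sum>r=0..k-1. apostol_bernoulli p (\<xi> ^ r) * S_sum k p r m N / (of_nat p * fact p))
              = (\<Sum>r=0..k-1. apostol_bernoulli p (\<xi> ^ r) * S_sum k p r m N) / fact p"
            using p by (simp add: sum_distrib_left sum_divide_distrib field_simps)
          finally show ?thesis unfolding gS by auto
        qed
        have "E $$ n = - of_int (m+1) * D1 $$ int p - (\<Sum>i=1..N. Dfl (\<xi>^i) i $$ int p)
            + (if p = 1 then - of_int (m+1) - (\<Sum>i=1..N. of_nat i) + 1 else 0)"
          unfolding Enth using p by (auto simp: sum.distrib sum_subtractf sum_negf algebra_simps)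
        also have "\<dots> = - of_int (m+1) * (apostol_bernoulli p 1 / fact p)
            - (\<Sum>i=1..N. of_nat i ^ p * apostol_bernoulli p (\<xi>^i) / fact p)
            + (if p = 1 then - of_int (m+1) - of_nat (N * (N + 1)) / 2 + 1 else 0)"
          using Dp Dip gauss_c[of N] by simp
        also have "\<dots> = of_nat p * X_term k \<xi> m N p"
          unfolding Xt by (simp add: sum_divide_distrib[symmetric] field_simps)
        finally show ?thesis unfolding R Yp using p by simp
      qed
    qed
  qed
  have dW: "fls_deriv W = W * fps_to_fls Yp"
  proof -
    have "fls_X * fls_deriv W / W = fls_X * fps_to_fls Yp" using ldW EY by (simp add: ld_def)
    then show ?thesis using Wnz by (simp add: field_simps)
  qed
  have dWp: "fps_deriv Wp = Wp * Yp"
    using dW unfolding WWp by (simp add: fls_deriv_fps_to_fls flip: fls_times_fps_to_fls)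
  have WpM: "Wp $ M = (\<Sum>j\<in>weighted_partitions M. \<Prod>i=1..M. X_term k \<xi> m N i ^ j i / fact (j i))"
    by (rule coeff_from_dlog[OF Wp0 dWp[unfolded Yp_def]])
  have C: "K * Fc N = (-1) ^ (N div k) * \<xi> powi (- m) / (of_nat k ^ (2 * (N div k) + 1) * fact (N div k))
    * (\<Prod>w=N mod k + 1..k-1. 1 - \<xi> ^ w)"
    using const_final[of m N] unfolding K_def by (simp add: prim.tl_def[OF prim_axioms])
  show ?thesis unfolding A2 WM WpM C by (simp add: M_def s_def)
qed



end
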